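(* For every $n\ge1$ and $r\in\mathbb{N}\cup\{0\}$, the only global smooth functions on the moduli spaces of $r$-jets of linear connections (symmetric or not) are the constants: $$\mathcal{C}^\infty(\mathfrak{C}^r_n)=\mathbb{R},\qquad\mathcal{C}^\infty(\widetilde{\mathfrak{C}}^r_n)=\mathbb{R}.$$ Equivalently, every smooth $\mathrm{Diff}_x$-invariant function on $J^r_x\mathcal{C}$ (resp. on $J^r_x\widetilde{\mathcal{C}}$) is constant.
   Context: $X$ is a smooth $n$-manifold, $x\in X$; $J^r_x\mathcal{C}$ (resp. $J^r_x\widetilde{\mathcal{C}}$) is the manifold of $r$-jets at $x$ of linear connections (resp. symmetric linear connections). The group $\mathrm{Diff}_x$ of germs of diffeomorphisms fixing $x$ acts by $(\tau\cdot\nabla)_D\bar D=\tau_*^{-1}(\nabla_{\tau_*D}\tau_*\bar D)$, through the Lie group $\mathrm{Diff}^{r+2}_x$ of $(r+2)$-jets. $\mathfrak{C}^r_n=J^r_x\mathcal{C}/\mathrm{Diff}^{r+2}_x$ and $\widetilde{\mathfrak{C}}^r_n=J^r_x\widetilde{\mathcal{C}}/\mathrm{Diff}^{r+2}_x$ are quotient ringed spaces: a function $h$ on an open $V$ of the quotient is smooth iff $h\circ\pi$ is smooth on $\pi^{-1}(V)$; hence $\mathcal{C}^\infty(\mathfrak{C}^r_n)=\mathcal{C}^\infty(J^r_x\mathcal{C})^{\mathrm{Diff}_x}$. These global smooth functions are called (scalar) differential invariants of order $\le r$. *)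

theory Defs
  imports "HOL-Analysis.Analysis" "HOL-Library.Multiset"
begin

coinductive smooth_on :: "'a::euclidean_space set \<Rightarrow> ('a \<Rightarrow> real) \<Rightarrow> bool"
  for U :: "'a set" where
  "(\<forall>x\<in>U. f differentiable (at x)) \<Longrightarrow>
   (\<forall>b\<in>Basis. smooth_on U (\<lambda>x. frechet_derivative f (at x) b)) \<Longrightarrow>
   smooth_on U f"

definition pd :: "'n::finite \<Rightarrow> (real^'n \<Rightarrow> real) \<Rightarrow> real^'n \<Rightarrow> real" where
  "pd i f x = frechet_derivative f (at x) (axis i 1)"

fun pdl :: "'n::finite list \<Rightarrow> (real^'n \<Rightarrow> real) \<Rightarrow> real^'n \<Rightarrow> real" where
  "pdl [] f = f"
| "pdl (i # is) f = pd i (pdl is f)"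

(* partial derivative d^alpha for a multi-index alpha (a multiset of coordinates) *)
definition pdm :: "'n::finite multiset \<Rightarrow> (real^'n \<Rightarrow> real) \<Rightarrow> real^'n \<Rightarrow> real" where
  "pdm \<alpha> f = pdl (SOME l. mset l = \<alpha>) f"

(* germ at 0 of a linear connection on R^n, given by its Christoffel symbols
   G i j k = Gamma^k_{ij}, i.e. nabla_{d_i} d_j = sum_k Gamma^k_{ij} d_k *)
definition conn_germ :: "('n::finite \<Rightarrow> 'n \<Rightarrow> 'n \<Rightarrow> real^'n \<Rightarrow> real) \<Rightarrow> bool" where
  "conn_germ G \<longleftrightarrow> (\<exists>U. open U \<and> 0 \<in> U \<and> (\<forall>i j k. smooth_on U (G i j k)))"

definition sym_conn_germ :: "('n::finite \<Rightarrow> 'n \<Rightarrow> 'n \<Rightarrow> real^'n \<Rightarrow> real) \<Rightarrow> bool" where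
  "sym_conn_germ G \<longleftrightarrow> conn_germ G \<and> (\<forall>i j k. G i j k = G j i k)"

definition diff_germ :: "(real^'n::finite \<Rightarrow> real^'n) \<Rightarrow> bool" where
  "diff_germ \<phi> \<longleftrightarrow> \<phi> 0 = 0 \<and>
     (\<exists>U \<psi>. open U \<and> 0 \<in> U \<and> open (\<phi> ` U) \<and> (\<forall>x\<in>U. \<psi> (\<phi> x) = x) \<and>
        (\<forall>c. smooth_on U (\<lambda>x. \<phi> x $ c)) \<and> (\<forall>c. smooth_on (\<phi> ` U) (\<lambda>y. \<psi> y $ c)))"

definition jac :: "(real^'n::finite \<Rightarrow> real^'n) \<Rightarrow> real^'n \<Rightarrow> real^'n^'n" where
  "jac \<phi> x = (\<chi> c a. pd a (\<lambda>y. \<phi> y $ c) x)"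

(* Christoffel symbols of tau.nabla, (tau.nabla)_D D' = tau_*^{-1}(nabla_{tau_* D} tau_* D') *)
definition act :: "(real^'n::finite \<Rightarrow> real^'n) \<Rightarrow> ('n \<Rightarrow> 'n \<Rightarrow> 'n \<Rightarrow> real^'n \<Rightarrow> real)
    \<Rightarrow> ('n \<Rightarrow> 'n \<Rightarrow> 'n \<Rightarrow> real^'n \<Rightarrow> real)" where
  "act \<phi> G = (\<lambda>i j k x. \<Sum>c\<in>UNIV. matrix_inv (jac \<phi> x) $ k $ c *
      (pd i (pd j (\<lambda>y. \<phi> y $ c)) x +
       (\<Sum>a\<in>UNIV. \<Sum>b\<in>UNIV. G a b c (\<phi> x) * pd i (\<lambda>y. \<phi> y $ a) x * pd j (\<lambda>y. \<phi> y $ b) x)))"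

(* coordinates of J^r_0 C: (i,j,k,alpha) with |alpha| <= r, value d^alpha Gamma^k_{ij}(0) *)
definition jet_index :: "nat \<Rightarrow> ('n::finite \<times> 'n \<times> 'n \<times> 'n multiset) set" where
  "jet_index r = {(i, j, k, \<alpha>). size \<alpha> \<le> r}"

definition jet_coords :: "('m \<Rightarrow> 'n::finite \<times> 'n \<times> 'n \<times> 'n multiset)
    \<Rightarrow> ('n \<Rightarrow> 'n \<Rightarrow> 'n \<Rightarrow> real^'n \<Rightarrow> real) \<Rightarrow> real^'m::finite" where
  "jet_coords \<sigma> G = (\<chi> m. case \<sigma> m of (i, j, k, \<alpha>) \<Rightarrow> pdm \<alpha> (G i j k) 0)"

(* coordinates of J^r_0 of symmetric connections: unordered lower pair beta = {#i,j#} *)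
definition sym_jet_index :: "nat \<Rightarrow> ('n::finite multiset \<times> 'n \<times> 'n multiset) set" where
  "sym_jet_index r = {(\<beta>, k, \<alpha>). size \<beta> = 2 \<and> size \<alpha> \<le> r}"

definition sym_jet_coords :: "('m \<Rightarrow> 'n::finite multiset \<times> 'n \<times> 'n multiset)
    \<Rightarrow> ('n \<Rightarrow> 'n \<Rightarrow> 'n \<Rightarrow> real^'n \<Rightarrow> real) \<Rightarrow> real^'m::finite" where
  "sym_jet_coords \<sigma> G = (\<chi> m. case \<sigma> m of (\<beta>, k, \<alpha>) \<Rightarrow>
      (let (i, j) = (SOME p. {#fst p, snd p#} = \<beta>) in pdm \<alpha> (G i j k) 0))"

end

theory Submission imports Defs begin

definition mnm :: "'n::finite multiset \<Rightarrow> real^'n \<Rightarrow> real" where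
  "mnm \<alpha> x = prod_mset (image_mset (\<lambda>c. x $ c) \<alpha>)"

lemma mono_empty[simp]: "mnm {#} x = 1" by (simp add: mnm_def)
lemma mono_add[simp]: "mnm (add_mset c \<alpha>) x = x $ c * mnm \<alpha> x" by (simp add: mnm_def)

lemma mono_zero: "mnm \<alpha> 0 = (if \<alpha> = {#} then 1 else 0)"
  by (induction \<alpha>) auto

lemma axn[simp]: "axis i (1::real) $ c = (if c = i then 1 else 0)" by (simp add: axis_def)

lemma mnm_scale: "mnm \<alpha> (t *\<^sub>R x) = t ^ size \<alpha> * mnm \<alpha> x"
  by (induction \<alpha>) auto

lemma mono_deriv_ex:
  "\<exists>D. (mnm \<alpha> has_derivative D) (at x) \<and>
      (\<forall>i. D (axis i 1) = real (count \<alpha> i) * mnm (\<alpha> - {#i#}) x)"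
proof (induction \<alpha>)
  case empty
  show ?case
    by (rule exI[of _ "\<lambda>_. 0"]) (simp add: mnm_def[symmetric] has_derivative_const[unfolded mnm_def] mnm_def)
next
  case (add c \<alpha>)
  then obtain D where D: "(mnm \<alpha> has_derivative D) (at x)"
    "\<And>i. D (axis i 1) = real (count \<alpha> i) * mnm (\<alpha> - {#i#}) x" by blast
  have e: "mnm (add_mset c \<alpha>) = (\<lambda>x. x $ c * mnm \<alpha> x)" by auto
  have lin: "((\<lambda>x. x $ c) has_derivative (\<lambda>v. v $ c)) (at x)"
    by (rule bounded_linear_imp_has_derivative) (rule bounded_linear_vec_nth)
  have hd: "(mnm (add_mset c \<alpha>) has_derivative (\<lambda>v. x $ c * D v + v $ c * mnm \<alpha> x)) (at x)"
    unfolding e by (rule has_derivative_mult[OF lin D(1)])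
  show ?case
  proof (intro exI conjI allI, rule hd)
    fix i
    show "x $ c * D (axis i 1) + axis i 1 $ c * mnm \<alpha> x =
          real (count (add_mset c \<alpha>) i) * mnm (add_mset c \<alpha> - {#i#}) x"
    proof (cases "c = i")
      case True
      show ?thesis
      proof (cases "i \<in># \<alpha>")
        case True
        then have "\<alpha> = add_mset i (\<alpha> - {#i#})" by simp
        then have "mnm \<alpha> x = x $ i * mnm (\<alpha> - {#i#}) x" by (metis mono_add)
        with \<open>c = i\<close> show ?thesis by (simp add: D(2) axn algebra_simps)
      next
        case False
        then have "count \<alpha> i = 0" by (simp add: not_in_iff)
        with \<open>c = i\<close> False show ?thesis by (simp add: D(2) axn)
      qed
    next
      case False
      then have "add_mset c \<alpha> - {#i#} = add_mset c (\<alpha> - {#i#})"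
        by (simp add: diff_union_swap2 add_mset_diff_bothsides)
      with False show ?thesis by (simp add: D(2) axn)
    qed
  qed
qed

lemma mnm_hd: "(mnm \<alpha> has_derivative frechet_derivative (mnm \<alpha>) (at x)) (at x)"
  using mono_deriv_ex[of \<alpha> x] frechet_derivative_at by blast

lemma mnm_fd: "frechet_derivative (mnm \<alpha>) (at x) (axis i 1) = real (count \<alpha> i) * mnm (\<alpha> - {#i#}) x"
  using mono_deriv_ex[of \<alpha> x] frechet_derivative_at by metis

definition psum :: "'a set \<Rightarrow> ('a \<Rightarrow> real) \<Rightarrow> ('a \<Rightarrow> 'n::finite multiset) \<Rightarrow> real^'n \<Rightarrow> real" where
  "psum A c m x = (\<Sum>a\<in>A. c a * mnm (m a) x)"

lemma psum_hd: "finite A \<Longrightarrow>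
  (psum A c m has_derivative (\<lambda>v. \<Sum>a\<in>A. c a * frechet_derivative (mnm (m a)) (at x) v)) (at x)"
  unfolding psum_def
  by (intro has_derivative_sum has_derivative_mult_right mnm_hd)

lemma psum_fd: "finite A \<Longrightarrow> frechet_derivative (psum A c m) (at x) (axis i 1)
   = psum A (\<lambda>a. c a * real (count (m a) i)) (\<lambda>a. m a - {#i#}) x"
  using frechet_derivative_at[OF psum_hd[of A c m x]]
  by (metis (no_types, lifting) mnm_fd psum_def sum.cong mult.assoc)

lemma psum_pd: "finite A \<Longrightarrow> pd i (psum A c m)
   = psum A (\<lambda>a. c a * real (count (m a) i)) (\<lambda>a. m a - {#i#})"
  by (rule ext) (simp add: pd_def psum_fd)

lemma psum_smooth:
  fixes A :: "'a set" and c :: "'a \<Rightarrow> real" and m :: "'a \<Rightarrow> 'n::finite multiset"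
  shows "finite A \<Longrightarrow> smooth_on UNIV (psum A c m)"
proof -
  assume fA: "finite A"
  show ?thesis
  proof (rule smooth_on.coinduct[where X="\<lambda>f. \<exists>c m. f = psum A c m"])
    show "\<exists>c' m'. psum A c m = psum A c' m'" by blast
  next
    fix f :: "real^'n \<Rightarrow> real" assume "\<exists>c m. f = psum A c m"
    then obtain c m where f: "f = psum A c m" by blast
    have d: "\<forall>x\<in>UNIV. f differentiable at x" unfolding f differentiable_def using psum_hd[OF fA] by blast
    have b: "\<forall>b\<in>Basis. (\<exists>c m. (\<lambda>x. frechet_derivative f (at x) b) = psum A c m)"
    proof
      fix b :: "real^'n" assume "b \<in> Basis"
      then obtain i where b: "b = axis i 1" by (auto simp: Basis_vec_def)
      show "\<exists>c m. (\<lambda>x. frechet_derivative f (at x) b) = psum A c m"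
        unfolding f b using psum_fd[OF fA] by blast
    qed
    show "\<exists>fa. f = fa \<and> (\<forall>x\<in>UNIV. fa differentiable at x) \<and>
             (\<forall>b\<in>Basis. (\<exists>c m. (\<lambda>x. frechet_derivative fa (at x) b) = psum A c m) \<or>
                    smooth_on UNIV (\<lambda>x. frechet_derivative fa (at x) b))"
      using d b by blast
  qed
qed

fun coefK :: "'n list \<Rightarrow> 'n multiset \<Rightarrow> real" where
  "coefK [] \<gamma> = 1"
| "coefK (i # l) \<gamma> = real (count (\<gamma> - mset l) i) * coefK l \<gamma>"

lemma coefK_nz: "coefK l \<gamma> \<noteq> 0 \<longleftrightarrow> mset l \<subseteq># \<gamma>"
proof (induction l)
  case Nil then show ?case by simp
next
  case (Cons i l)
  have "(count (\<gamma> - mset l) i \<noteq> 0 \<and> mset l \<subseteq># \<gamma>) \<longleftrightarrow> add_mset i (mset l) \<subseteq># \<gamma>"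
  proof
    assume h: "count (\<gamma> - mset l) i \<noteq> 0 \<and> mset l \<subseteq># \<gamma>"
    show "add_mset i (mset l) \<subseteq># \<gamma>" unfolding subseteq_mset_def
    proof
      fix a show "count (add_mset i (mset l)) a \<le> count \<gamma> a"
        using h unfolding subseteq_mset_def by (cases "a = i") auto
    qed
  next
    assume h: "add_mset i (mset l) \<subseteq># \<gamma>"
    have "count (add_mset i (mset l)) i \<le> count \<gamma> i" using h by (rule mset_subset_eq_count)
    moreover have "mset l \<subseteq># \<gamma>" using h by (meson mset_subset_eq_insertD subset_mset.less_imp_le)
    ultimately show "count (\<gamma> - mset l) i \<noteq> 0 \<and> mset l \<subseteq># \<gamma>" by simp
  qed
  with Cons show ?case by auto
qed

lemma pdl_psum: "finite A \<Longrightarrow>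
   pdl l (psum A c m) = psum A (\<lambda>a. c a * coefK l (m a)) (\<lambda>a. m a - mset l)"
proof (induction l)
  case Nil then show ?case by simp
next
  case (Cons i l)
  show ?case
    using Cons by (simp add: psum_pd) (simp add: psum_def fun_eq_iff mult_ac)
qed

lemma pdl_psum0: "finite A \<Longrightarrow>
   pdl l (psum A c m) 0 = (\<Sum>a\<in>A. if m a = mset l then c a * coefK l (m a) else 0)"
proof -
  assume fA: "finite A"
  show ?thesis unfolding pdl_psum[OF fA] psum_def
  proof (rule sum.cong[OF refl])
    fix a
    show "c a * coefK l (m a) * mnm (m a - mset l) 0 =
          (if m a = mset l then c a * coefK l (m a) else 0)"
    proof (cases "coefK l (m a) = 0")
      case True then show ?thesis by auto
    next
      case False
      then have s: "mset l \<subseteq># m a" using coefK_nz by blast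
      have "m a - mset l = {#} \<longleftrightarrow> m a = mset l"
      proof
        assume "m a - mset l = {#}"
        then have "\<forall>x. count (m a) x \<le> count (mset l) x"
          by (metis count_diff count_empty diff_is_0_eq)
        then show "m a = mset l" using s by (simp add: multiset_eq_iff subseteq_mset_def le_antisym)
      qed simp
      then show ?thesis by (simp add: mono_zero)
    qed
  qed
qed

definition cK :: "'n multiset \<Rightarrow> real" where
  "cK \<beta> = coefK (SOME l. mset l = \<beta>) \<beta>"

lemma cK_nz: "cK \<beta> \<noteq> 0"
  unfolding cK_def coefK_nz by (metis (mono_tags) ex_mset someI_ex subset_mset.order_refl)

lemma pdm_psum0: "finite A \<Longrightarrow>
   pdm \<beta> (psum A c m) 0 = (\<Sum>a\<in>A. if m a = \<beta> then c a * cK \<beta> else 0)"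
proof -
  assume fA: "finite A"
  have "mset (SOME l. mset l = \<beta>) = \<beta>" by (metis (mono_tags) ex_mset someI_ex)
  then show ?thesis unfolding pdm_def pdl_psum0[OF fA] cK_def
    by (intro sum.cong) auto
qed

lemma lin_psum: "(\<lambda>y::real^'n::finite. t * y $ c) = psum {()} (\<lambda>_. t) (\<lambda>_. {#c#})"
  by (simp add: psum_def fun_eq_iff mnm_def)

lemma pd_lin: "pd a (\<lambda>y::real^'n::finite. t * y $ c) x = (if a = c then t else 0)"
proof -
  note lin_psum[of t c]
  then show ?thesis by (simp add: psum_pd psum_def)
qed

lemma pd_pd_lin: "pd i (pd j (\<lambda>y::real^'n::finite. t * y $ c)) x = 0"
proof -
  note lin_psum[of t c]
  then show ?thesis by (simp add: psum_pd psum_def)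
qed

lemma lin_smooth: "smooth_on UNIV (\<lambda>y::real^'n::finite. t * y $ c)"
  unfolding lin_psum by (rule psum_smooth) simp

lemma diff_germ_hom: "t \<noteq> 0 \<Longrightarrow> diff_germ (\<lambda>x::real^'n::finite. t *\<^sub>R x)"
  unfolding diff_germ_def
proof (intro conjI exI[of _ UNIV] exI[of _ "\<lambda>y. (1/t) *\<^sub>R y"])
  assume t: "t \<noteq> 0"
  have s: "range (\<lambda>x::real^'n. t *\<^sub>R x) = UNIV"
    using t by (intro surjI[of "\<lambda>x. t *\<^sub>R x" "\<lambda>y. (1/t) *\<^sub>R y"]) simp
  show "open (range (\<lambda>x::real^'n. t *\<^sub>R x))" using s by simp
  show "\<forall>x\<in>UNIV. (1 / t) *\<^sub>R t *\<^sub>R (x::real^'n) = x" using t by simp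
  show "\<forall>c. smooth_on UNIV (\<lambda>x::real^'n. (t *\<^sub>R x) $ c)"
  proof
    fix c
    have "(\<lambda>x::real^'n. (t *\<^sub>R x) $ c) = (\<lambda>y. t * y $ c)" by simp
    then show "smooth_on UNIV (\<lambda>x::real^'n. (t *\<^sub>R x) $ c)" using lin_smooth by metis
  qed
  show "\<forall>c. smooth_on (range (\<lambda>x::real^'n. t *\<^sub>R x)) (\<lambda>y. ((1/t) *\<^sub>R y) $ c)"
    unfolding s
  proof
    fix c
    have "(\<lambda>x::real^'n. ((1/t) *\<^sub>R x) $ c) = (\<lambda>y. (1/t) * y $ c)" by simp
    then show "smooth_on UNIV (\<lambda>x::real^'n. ((1/t) *\<^sub>R x) $ c)" using lin_smooth by metis
  qed
qed auto

lemma mult_if0: "(x::real) * (if P then y else 0) = (if P then x * y else 0)" by simp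
lemma if0_mult: "(if P then y else 0) * (x::real) = (if P then y * x else 0)" by simp

lemma mat_mult_mat: "(mat a :: real^'n::finite^'n) ** mat b = mat (a * b)"
proof -
  have "((mat a :: real^'n^'n) ** mat b) $ i $ j = mat (a * b) $ i $ j" for i j
  proof -
    have "((mat a :: real^'n^'n) ** mat b) $ i $ j = (\<Sum>k\<in>UNIV. (if i = k then a else 0) * (if k = j then b else 0))"
      by (simp add: matrix_matrix_mult_def mat_def)
    also have "\<dots> = (if i = j then a * b else 0)" by (simp add: mult_if0 if0_mult)
    finally show ?thesis by (simp add: mat_def)
  qed
  then show ?thesis by (simp add: vec_eq_iff)
qed

lemma matrix_inv_mat: "t \<noteq> 0 \<Longrightarrow> matrix_inv (mat t :: real^'n::finite^'n) = mat (1/t)"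
proof -
  assume t: "t \<noteq> 0"
  have AB: "(mat t :: real^'n^'n) ** mat (1/t) = mat 1" "(mat (1/t) :: real^'n^'n) ** mat t = mat 1"
    using t by (simp_all add: mat_mult_mat)
  define M where "M = matrix_inv (mat t :: real^'n^'n)"
  have "\<exists>A'. (mat t :: real^'n^'n) ** A' = mat 1 \<and> A' ** mat t = mat 1" using AB by blast
  then have M: "(mat t :: real^'n^'n) ** M = mat 1 \<and> M ** mat t = mat 1"
    unfolding matrix_inv_def M_def using someI_ex[of "\<lambda>A'. (mat t :: real^'n^'n) ** A' = mat 1 \<and> A' ** mat t = mat 1"] by blast
  have "M = M ** ((mat t :: real^'n^'n) ** mat (1/t))"
    using AB by simp
  also have "\<dots> = (M ** mat t) ** mat (1/t)" by (rule matrix_mul_assoc)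
  also have "\<dots> = mat (1/t)" using M by simp
  finally show ?thesis unfolding M_def .
qed


lemma act_hom: "t \<noteq> 0 \<Longrightarrow> act (\<lambda>x::real^'n::finite. t *\<^sub>R x) G = (\<lambda>i j k x. t * G i j k (t *\<^sub>R x))"
proof -
  assume t: "t \<noteq> 0"
  have jac: "jac (\<lambda>x::real^'n::finite. t *\<^sub>R x) x = mat t" for x
    by (simp add: jac_def pd_lin mat_def vec_eq_iff)
  have inner: "(\<Sum>a\<in>UNIV. \<Sum>b\<in>UNIV. G a b c y * (if i = a then t else 0) * (if j = b then t else 0))
      = G i j c y * t * t" for i j c y
    by (simp add: mult_if0 if0_mult)
  have outer: "(\<Sum>c\<in>UNIV. (if k = c then 1/t else 0) * (G i j c y * t * t)) = t * G i j k y" for i j k y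
    using t by (simp add: if0_mult power2_eq_square)
  have p1: "pd a (\<lambda>y. (t *\<^sub>R y) $ c) x = (if a = c then t else 0)" for a c and x :: "real^'n"
  proof -
    have "(\<lambda>y::real^'n. (t *\<^sub>R y) $ c) = (\<lambda>y. t * y $ c)" by simp
    then show ?thesis using pd_lin by metis
  qed
  have p2: "pd i (pd j (\<lambda>y. (t *\<^sub>R y) $ c)) x = 0" for i j c and x :: "real^'n"
  proof -
    have "(\<lambda>y::real^'n. (t *\<^sub>R y) $ c) = (\<lambda>y. t * y $ c)" by simp
    then show ?thesis using pd_pd_lin by metis
  qed
  have mn: "mat a $ k $ c = (if k = c then a else (0::real))" for a and k c :: 'n
    by (simp add: mat_def)
  show ?thesis
  proof (intro ext)
    fix i j k and x :: "real^'n"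
    have "act (\<lambda>x::real^'n::finite. t *\<^sub>R x) G i j k x =
      (\<Sum>c\<in>UNIV. (if k = c then 1/t else 0) * (0 + (\<Sum>a\<in>UNIV. \<Sum>b\<in>UNIV. G a b c (t *\<^sub>R x) *
           (if i = a then t else 0) * (if j = b then t else 0))))"
      unfolding act_def jac matrix_inv_mat[OF t] by (simp only: p1 p2 mn)
    also have "\<dots> = t * G i j k (t *\<^sub>R x)" by (simp only: inner outer add_0_left)
    finally show "act (\<lambda>x::real^'n::finite. t *\<^sub>R x) G i j k x = t * G i j k (t *\<^sub>R x)" .
  qed
qed

definition Gen :: "('m::finite \<Rightarrow> 'n::finite \<times> 'n \<times> 'n \<times> 'n multiset) \<Rightarrow> real^'m \<Rightarrow> real
    \<Rightarrow> ('n \<Rightarrow> 'n \<Rightarrow> 'n \<Rightarrow> real^'n \<Rightarrow> real)" where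
  "Gen \<sigma> y t = (\<lambda>i j k. psum UNIV (\<lambda>m. if fst (\<sigma> m) = i \<and> fst (snd (\<sigma> m)) = j \<and> fst (snd (snd (\<sigma> m))) = k
      then t ^ Suc (size (snd (snd (snd (\<sigma> m))))) * y $ m / cK (snd (snd (snd (\<sigma> m)))) else 0)
      (\<lambda>m. snd (snd (snd (\<sigma> m)))))"

definition SGen :: "('m::finite \<Rightarrow> 'n::finite multiset \<times> 'n \<times> 'n multiset) \<Rightarrow> real^'m \<Rightarrow> real
    \<Rightarrow> ('n \<Rightarrow> 'n \<Rightarrow> 'n \<Rightarrow> real^'n \<Rightarrow> real)" where
  "SGen \<sigma> y t = (\<lambda>i j k. psum UNIV (\<lambda>m. if fst (\<sigma> m) = {#i, j#} \<and> fst (snd (\<sigma> m)) = k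
      then t ^ Suc (size (snd (snd (\<sigma> m)))) * y $ m / cK (snd (snd (\<sigma> m))) else 0)
      (\<lambda>m. snd (snd (\<sigma> m))))"

lemma psum_scale: "t * psum A c m (t *\<^sub>R x) = psum A (\<lambda>a. t * t ^ size (m a) * c a) m x"
  by (simp add: psum_def mnm_scale sum_distrib_left mult_ac)

lemma act_Gen: "t \<noteq> 0 \<Longrightarrow> act (\<lambda>x. t *\<^sub>R x) (Gen \<sigma> y 1) = Gen \<sigma> y t"
  unfolding act_hom Gen_def psum_scale
  by (intro ext) (simp add: psum_def if_distrib cong: if_cong)

lemma act_SGen: "t \<noteq> 0 \<Longrightarrow> act (\<lambda>x. t *\<^sub>R x) (SGen \<sigma> y 1) = SGen \<sigma> y t"
  unfolding act_hom SGen_def psum_scale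
  by (intro ext) (simp add: psum_def if_distrib cong: if_cong)

lemma Gen_conn: "conn_germ (Gen \<sigma> y t)"
  unfolding conn_germ_def Gen_def by (intro exI[of _ UNIV]) (simp add: psum_smooth)

lemma SGen_conn: "sym_conn_germ (SGen \<sigma> y t)"
  unfolding sym_conn_germ_def conn_germ_def SGen_def
  by (intro conjI exI[of _ UNIV]) (simp_all add: psum_smooth add_mset_commute)

lemma jet_Gen:
  assumes inj: "inj \<sigma>"
  shows "jet_coords \<sigma> (Gen \<sigma> y t) = (\<chi> m. t ^ Suc (size (snd (snd (snd (\<sigma> m))))) * y $ m)"
proof -
  have "pdm \<alpha> (Gen \<sigma> y t i j k) 0 = t ^ Suc (size \<alpha>) * y $ m" if sm: "\<sigma> m = (i, j, k, \<alpha>)" for m i j k \<alpha>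
  proof -
    have "pdm \<alpha> (Gen \<sigma> y t i j k) 0 = (\<Sum>m'\<in>UNIV. if m' = m then t ^ Suc (size \<alpha>) * y $ m else 0)"
      unfolding Gen_def pdm_psum0[OF finite]
    proof (rule sum.cong[OF refl])
      fix m'
      have iff: "(snd (snd (snd (\<sigma> m'))) = \<alpha> \<and> fst (\<sigma> m') = i \<and> fst (snd (\<sigma> m')) = j \<and> fst (snd (snd (\<sigma> m'))) = k)
          \<longleftrightarrow> m' = m"
      proof
        assume "snd (snd (snd (\<sigma> m'))) = \<alpha> \<and> fst (\<sigma> m') = i \<and> fst (snd (\<sigma> m')) = j \<and> fst (snd (snd (\<sigma> m'))) = k"
        then have "\<sigma> m' = \<sigma> m" using sm by (simp add: prod_eq_iff)
        then show "m' = m" using inj by (simp add: inj_eq)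
      qed (use sm in simp)
      show "(if snd (snd (snd (\<sigma> m'))) = \<alpha> then
             (if fst (\<sigma> m') = i \<and> fst (snd (\<sigma> m')) = j \<and> fst (snd (snd (\<sigma> m'))) = k
              then t ^ Suc (size (snd (snd (snd (\<sigma> m'))))) * y $ m' / cK (snd (snd (snd (\<sigma> m')))) else 0) * cK \<alpha>
             else 0) = (if m' = m then t ^ Suc (size \<alpha>) * y $ m else 0)"
        using iff[symmetric] sm cK_nz[of \<alpha>] by auto
    qed
    also have "\<dots> = t ^ Suc (size \<alpha>) * y $ m" by simp
    finally show ?thesis .
  qed
  then show ?thesis
    unfolding jet_coords_def by (simp add: vec_eq_iff split: prod.split)
qed

lemma size2: "size (\<beta>::'a multiset) = 2 \<Longrightarrow> \<exists>a b. \<beta> = {#a, b#}"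
proof -
  assume "size \<beta> = 2"
  then have "size \<beta> = Suc (Suc 0)" by simp
  then obtain a B where B: "\<beta> = {#a#} + B" "size B = Suc 0" by (rule size_mset_SucE)
  obtain b C where C: "B = {#b#} + C" "size C = 0" using B(2) by (rule size_mset_SucE)
  have "C = {#}" using C(2) by simp
  then show ?thesis by (intro exI[of _ a] exI[of _ b]) (simp add: B C)
qed

lemma jet_SGen:
  assumes inj: "inj \<sigma>" and sz: "\<forall>p. size (fst (\<sigma> p)) = 2"
  shows "sym_jet_coords \<sigma> (SGen \<sigma> y t) = (\<chi> m. t ^ Suc (size (snd (snd (\<sigma> m)))) * y $ m)"
proof -
  have H1: "pdm \<alpha> (SGen \<sigma> y t i j k) 0 = t ^ Suc (size \<alpha>) * y $ m"
    if sm: "\<sigma> m = ({#i, j#}, k, \<alpha>)" for m i j k \<alpha>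
  proof -
    have "pdm \<alpha> (SGen \<sigma> y t i j k) 0 = (\<Sum>m'\<in>UNIV. if m' = m then t ^ Suc (size \<alpha>) * y $ m else 0)"
      unfolding SGen_def pdm_psum0[OF finite]
    proof (rule sum.cong[OF refl])
      fix m'
      have iff: "(snd (snd (\<sigma> m')) = \<alpha> \<and> fst (\<sigma> m') = {#i, j#} \<and> fst (snd (\<sigma> m')) = k)
          \<longleftrightarrow> m' = m"
      proof
        assume "snd (snd (\<sigma> m')) = \<alpha> \<and> fst (\<sigma> m') = {#i, j#} \<and> fst (snd (\<sigma> m')) = k"
        then have "\<sigma> m' = \<sigma> m" using sm by (simp add: prod_eq_iff)
        then show "m' = m" using inj by (simp add: inj_eq)
      qed (use sm in simp)
      show "(if snd (snd (\<sigma> m')) = \<alpha> then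
             (if fst (\<sigma> m') = {#i, j#} \<and> fst (snd (\<sigma> m')) = k
              then t ^ Suc (size (snd (snd (\<sigma> m')))) * y $ m' / cK (snd (snd (\<sigma> m'))) else 0) * cK \<alpha>
             else 0) = (if m' = m then t ^ Suc (size \<alpha>) * y $ m else 0)"
        using iff[symmetric] sm cK_nz[of \<alpha>] by auto
    qed
    also have "\<dots> = t ^ Suc (size \<alpha>) * y $ m" by simp
    finally show ?thesis .
  qed
  have H2: "(SOME q. {#fst q, snd q#} = fst (\<sigma> m)) = q \<Longrightarrow> {#fst q, snd q#} = fst (\<sigma> m)" for m q
  proof -
    assume q: "(SOME q. {#fst q, snd q#} = fst (\<sigma> m)) = q"
    obtain a b where "fst (\<sigma> m) = {#a, b#}" using size2 sz by blast
    then have "\<exists>q. {#fst q, snd q#} = fst (\<sigma> m)" by (intro exI[of _ "(a, b)"]) simp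
    from someI_ex[OF this] show ?thesis using q by simp
  qed
  have "(case \<sigma> m of (\<beta>, k, \<alpha>) \<Rightarrow> (let (i, j) = (SOME p. {#fst p, snd p#} = \<beta>) in pdm \<alpha> (SGen \<sigma> y t i j k) 0))
      = t ^ Suc (size (snd (snd (\<sigma> m)))) * y $ m" for m
  proof -
    obtain \<beta> k \<alpha> where sm: "\<sigma> m = (\<beta>, k, \<alpha>)" by (metis prod_cases3)
    obtain q where q: "(SOME p. {#fst p, snd p#} = \<beta>) = q" by blast
    then have "{#fst q, snd q#} = \<beta>" using H2[of m q] sm by simp
    then have "pdm \<alpha> (SGen \<sigma> y t (fst q) (snd q) k) 0 = t ^ Suc (size \<alpha>) * y $ m"
      using H1[of m "fst q" "snd q" k \<alpha>] sm by simp
    then show ?thesis using sm q by (simp add: split_beta)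
  qed
  then show ?thesis
    unfolding sym_jet_coords_def by (simp add: vec_eq_iff)
qed

lemma const_lemma:
  fixes h :: "real^'m::finite \<Rightarrow> real" and f :: "'m \<Rightarrow> nat"
  assumes sm: "smooth_on UNIV h" and inv: "\<forall>t>0. h (\<chi> m. t ^ Suc (f m) * y $ m) = h y"
  shows "h y = h 0"
proof -
  have "\<forall>x\<in>UNIV. h differentiable at x" using sm by (cases rule: smooth_on.cases) auto
  then have cont: "isCont h 0" using differentiable_imp_continuous_within by blast
  have lim: "((\<lambda>t::real. \<chi> m. t ^ Suc (f m) * y $ m) \<longlongrightarrow> (\<chi> m. 0 ^ Suc (f m) * y $ m)) (at_right 0)"
    by (intro tendsto_intros)
  have z: "(\<chi> m. (0::real) ^ Suc (f m) * y $ m) = 0" by (simp add: vec_eq_iff)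
  have "((\<lambda>t::real. h (\<chi> m. t ^ Suc (f m) * y $ m)) \<longlongrightarrow> h 0) (at_right 0)"
    using isCont_tendsto_compose[OF cont lim[unfolded z]] .
  moreover have "\<forall>\<^sub>F t in at_right (0::real). h (\<chi> m. t ^ Suc (f m) * y $ m) = h y"
    using eventually_at_right_less[of 0] by eventually_elim (use inv in auto)
  ultimately have "((\<lambda>t::real. h y) \<longlongrightarrow> h 0) (at_right 0)"
    by (rule Lim_transform_eventually)
  then show ?thesis by (simp add: tendsto_const_iff)
qed

theorem mainTheorem9:
  fixes r :: nat
  shows "(\<forall>(\<sigma> :: 'm::finite \<Rightarrow> 'n::finite \<times> 'n \<times> 'n \<times> 'n multiset) (h :: real^'m \<Rightarrow> real).
            bij_betw \<sigma> UNIV (jet_index r) \<and> smooth_on UNIV h \<and>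
            (\<forall>\<phi> G. diff_germ \<phi> \<and> conn_germ G \<longrightarrow>
                h (jet_coords \<sigma> (act \<phi> G)) = h (jet_coords \<sigma> G))
            \<longrightarrow> (\<exists>c. \<forall>y. h y = c))
       \<and> (\<forall>(\<sigma> :: 'p::finite \<Rightarrow> 'n multiset \<times> 'n \<times> 'n multiset) (h :: real^'p \<Rightarrow> real).
            bij_betw \<sigma> UNIV (sym_jet_index r) \<and> smooth_on UNIV h \<and>
            (\<forall>\<phi> G. diff_germ \<phi> \<and> sym_conn_germ G \<longrightarrow>
                h (sym_jet_coords \<sigma> (act \<phi> G)) = h (sym_jet_coords \<sigma> G))
            \<longrightarrow> (\<exists>c. \<forall>y. h y = c))"
proof (intro conjI allI impI)
  fix \<sigma> :: "'m::finite \<Rightarrow> 'n::finite \<times> 'n \<times> 'n \<times> 'n multiset" and h :: "real^'m \<Rightarrow> real"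
  assume a: "bij_betw \<sigma> UNIV (jet_index r) \<and> smooth_on UNIV h \<and>
            (\<forall>\<phi> G. diff_germ \<phi> \<and> conn_germ G \<longrightarrow>
                h (jet_coords \<sigma> (act \<phi> G)) = h (jet_coords \<sigma> G))"
  then have inj: "inj \<sigma>" by (simp add: bij_betw_def)
  have "h y = h 0" for y
  proof (rule const_lemma[where f="\<lambda>m. size (snd (snd (snd (\<sigma> m))))"])
    show "smooth_on UNIV h" using a by blast
    show "\<forall>t>0. h (\<chi> m. t ^ Suc (size (snd (snd (snd (\<sigma> m))))) * y $ m) = h y"
    proof (intro allI impI)
      fix t :: real assume "t > 0"
      then have t: "t \<noteq> 0" by simp
      have "h (jet_coords \<sigma> (act (\<lambda>x. t *\<^sub>R x) (Gen \<sigma> y 1))) = h (jet_coords \<sigma> (Gen \<sigma> y 1))"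
        using a diff_germ_hom[OF t] Gen_conn by blast
      then show "h (\<chi> m. t ^ Suc (size (snd (snd (snd (\<sigma> m))))) * y $ m) = h y"
        unfolding act_Gen[OF t] jet_Gen[OF inj] by simp
    qed
  qed
  then show "\<exists>c. \<forall>y. h y = c" by blast
next
  fix \<sigma> :: "'p::finite \<Rightarrow> 'n::finite multiset \<times> 'n \<times> 'n multiset" and h :: "real^'p \<Rightarrow> real"
  assume a: "bij_betw \<sigma> UNIV (sym_jet_index r) \<and> smooth_on UNIV h \<and>
            (\<forall>\<phi> G. diff_germ \<phi> \<and> sym_conn_germ G \<longrightarrow>
                h (sym_jet_coords \<sigma> (act \<phi> G)) = h (sym_jet_coords \<sigma> G))"
  then have inj: "inj \<sigma>" by (simp add: bij_betw_def)
  have sz: "\<forall>p. size (fst (\<sigma> p)) = 2"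
  proof
    fix p
    have "\<sigma> p \<in> sym_jet_index r" using a bij_betwE by blast
    then show "size (fst (\<sigma> p)) = 2" by (auto simp: sym_jet_index_def)
  qed
  have "h y = h 0" for y
  proof (rule const_lemma[where f="\<lambda>m. size (snd (snd (\<sigma> m)))"])
    show "smooth_on UNIV h" using a by blast
    show "\<forall>t>0. h (\<chi> m. t ^ Suc (size (snd (snd (\<sigma> m)))) * y $ m) = h y"
    proof (intro allI impI)
      fix t :: real assume "t > 0"
      then have t: "t \<noteq> 0" by simp
      have "h (sym_jet_coords \<sigma> (act (\<lambda>x. t *\<^sub>R x) (SGen \<sigma> y 1))) = h (sym_jet_coords \<sigma> (SGen \<sigma> y 1))"
        using a diff_germ_hom[OF t] SGen_conn by blast
      then show "h (\<chi> m. t ^ Suc (size (snd (snd (\<sigma> m)))) * y $ m) = h y"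
        unfolding act_SGen[OF t] jet_SGen[OF inj sz] by simp
    qed
  qed
  then show "\<exists>c. \<forall>y. h y = c" by blast
qed

end
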